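(* Let $f(x)=x^5+px^4+qx^3+rx^2+sx+t$ with real coefficients, and suppose $D=0$ and $L_1>0$ (so that $f$ has one real double root and three distinct real simple roots). Then the double root of $f$ equals $d=C_0/L_1$. Put $F_1=q+4pd+10d^2$, $F_2=r+3qd+6pd^2+10d^3$, $F_3=pq+4p^2d-24pd^2-22qd-40d^3-9r$. Then, writing the roots in increasing order: (a) if $F_1>0$, $F_2<0$, $F_3<0$: double $<$ single $<$ single $<$ single; (b) if $F_1>0$, $F_2>0$, $F_3>0$: single $<$ single $<$ single $<$ double; (c) if $F_2>0$ and ($F_1\le0$ or $F_3\le 0$): single $<$ double $<$ single $<$ single; (d) if $F_2<0$ and ($F_1\le 0$ or $F_3\ge0$): single $<$ single $<$ double $<$ single.
   Context: Let $\alpha_1,\dots,\alpha_5\in\mathbb{C}$ be the roots of $f$ listed with multiplicity. $D=\prod_{1\le i<j\le 5}(\alpha_i-\alpha_j)^2$ is the discriminant of $f$. $L_1=-264ps^2r-12p^3tq^2+36r^3pq-124srpq^2+28srp^3q+260sptq-132p^2qrt+240pr^2t+234sqr^2+32p^4tr+48ptq^3-56sp^3t-80q^2rt+194qs^2p^2-600str-6q^3sp^2+2p^2q^2r^2-12sr^2p^2-54r^4+320s^3-8q^3r^2-8r^3p^3+250qt^2-176q^2s^2+24q^4s-36p^4s^2-100p^2t^2$. $C_0=48sp^4t+4sp^3r^2+80p^3t^2-32p^3rqt-3p^3s^2q+7s^2p^2r-p^2srq^2-4p^2r^2t+9p^2tq^3-266sqp^2t+16ps^3+146ptrq^2-18spr^2q+290sptr-275pqt^2+12ps^2q^2+4sq^3r-195r^2qt+260sq^2t+27sr^3+375t^2r-36q^4t-48rs^2q-400ts^2$.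 (Note $f(y+d)=y^2\,(y^3+(p+5d)y^2+F_1y+F_2)$, and $F_3=(p+5d)F_1-9F_2$.) *)

theory Defs
  imports Complex_Main
begin

definition quintic :: "'a::comm_ring_1 \<Rightarrow> 'a \<Rightarrow> 'a \<Rightarrow> 'a \<Rightarrow> 'a \<Rightarrow> 'a \<Rightarrow> 'a" where
  "quintic p q r s t x = x^5 + p*x^4 + q*x^3 + r*x^2 + s*x + t"

text \<open>Discriminant of a monic quintic in terms of its roots alpha 0..4 listed with multiplicity.\<close>
definition disc_roots5 :: "(nat \<Rightarrow> complex) \<Rightarrow> complex" where
  "disc_roots5 \<alpha> = (\<Prod>i<5. \<Prod>j\<in>{i<..<5}. (\<alpha> i - \<alpha> j)^2)"

definition L1 :: "real \<Rightarrow> real \<Rightarrow> real \<Rightarrow> real \<Rightarrow> real \<Rightarrow> real" where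
  "L1 p q r s t = -264*p*s^2*r-12*p^3*t*q^2+36*r^3*p*q-124*s*r*p*q^2+28*s*r*p^3*q+260*s*p*t*q-132*p^2*q*r*t+240*p*r^2*t+234*s*q*r^2+32*p^4*t*r+48*p*t*q^3-56*s*p^3*t-80*q^2*r*t+194*q*s^2*p^2-600*s*t*r-6*q^3*s*p^2+2*p^2*q^2*r^2-12*s*r^2*p^2-54*r^4+320*s^3-8*q^3*r^2-8*r^3*p^3+250*q*t^2-176*q^2*s^2+24*q^4*s-36*p^4*s^2-100*p^2*t^2"

definition C0 :: "real \<Rightarrow> real \<Rightarrow> real \<Rightarrow> real \<Rightarrow> real \<Rightarrow> real" where
  "C0 p q r s t = 48*s*p^4*t+4*s*p^3*r^2+80*p^3*t^2-32*p^3*r*q*t-3*p^3*s^2*q+7*s^2*p^2*r-p^2*s*r*q^2-4*p^2*r^2*t+9*p^2*t*q^3-266*s*q*p^2*t+16*p*s^3+146*p*t*r*q^2-18*s*p*r^2*q+290*s*p*t*r-275*p*q*t^2+12*p*s^2*q^2+4*s*q^3*r-195*r^2*q*t+260*s*q^2*t+27*s*r^3+375*t^2*r-36*q^4*t-48*r*s^2*q-400*t*s^2"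

end

theory Submission
  imports Defs "HOL-Computational_Algebra.Polynomial"
begin

definition gL1 :: "'a::comm_ring_1 \<Rightarrow> 'a \<Rightarrow> 'a \<Rightarrow> 'a \<Rightarrow> 'a \<Rightarrow> 'a" where
 "gL1 p q r s t = -264*p*s^2*r-12*p^3*t*q^2+36*r^3*p*q-124*s*r*p*q^2+28*s*r*p^3*q+260*s*p*t*q-132*p^2*q*r*t+240*p*r^2*t+234*s*q*r^2+32*p^4*t*r+48*p*t*q^3-56*s*p^3*t-80*q^2*r*t+194*q*s^2*p^2-600*s*t*r-6*q^3*s*p^2+2*p^2*q^2*r^2-12*s*r^2*p^2-54*r^4+320*s^3-8*q^3*r^2-8*r^3*p^3+250*q*t^2-176*q^2*s^2+24*q^4*s-36*p^4*s^2-100*p^2*t^2"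
definition gC0 :: "'a::comm_ring_1 \<Rightarrow> 'a \<Rightarrow> 'a \<Rightarrow> 'a \<Rightarrow> 'a \<Rightarrow> 'a" where
 "gC0 p q r s t = 48*s*p^4*t+4*s*p^3*r^2+80*p^3*t^2-32*p^3*r*q*t-3*p^3*s^2*q+7*s^2*p^2*r-p^2*s*r*q^2-4*p^2*r^2*t+9*p^2*t*q^3-266*s*q*p^2*t+16*p*s^3+146*p*t*r*q^2-18*s*p*r^2*q+290*s*p*t*r-275*p*q*t^2+12*p*s^2*q^2+4*s*q^3*r-195*r^2*q*t+260*s*q^2*t+27*s*r^3+375*t^2*r-36*q^4*t-48*r*s^2*q-400*t*s^2"
lemma idC: fixes d e1 e2 e3 :: "'a::idom"
 shows "gC0 (-e1-2*d) (e2+2*d*e1+d^2) (-e3-2*d*e2-d^2*e1) (2*d*e3+d^2*e2) (-(d^2*e3))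
   = d * gL1 (-e1-2*d) (e2+2*d*e1+d^2) (-e3-2*d*e2-d^2*e1) (2*d*e3+d^2*e2) (-(d^2*e3))"
 unfolding gC0_def gL1_def by algebra
lemma idL: fixes d e1 e2 e3 :: "'a::idom"
 shows "gL1 (-e1-2*d) (e2+2*d*e1+d^2) (-e3-2*d*e2-d^2*e1) (2*d*e3+d^2*e2) (-(d^2*e3))
   = 2 * (d^3-e1*d^2+e2*d-e3)^2 * (e1^2*e2^2-4*e2^3-4*e1^3*e3+18*e1*e2*e3-27*e3^2)"
 unfolding gL1_def by algebra
lemma L1g: "L1 = gL1" and C0g: "C0 = gC0" by (auto simp: fun_eq_iff L1_def gL1_def C0_def gC0_def)
lemma L1c: "of_real (L1 p q r s t) = gL1 (of_real p) (of_real q) (of_real r) (of_real s) (of_real t)"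
  by (simp add: L1_def gL1_def)
lemma C0c: "of_real (C0 p q r s t) = gC0 (of_real p) (of_real q) (of_real r) (of_real s) (of_real t)"
  by (simp add: C0_def gC0_def)


lemma signs_u:
  fixes a b c :: real
  assumes ab: "a<b" and bc: "b<c" and a0: "a\<noteq>0" and b0: "b\<noteq>0" and c0: "c\<noteq>0"
  defines "F1 \<equiv> a*b+a*c+b*c" and "P \<equiv> a*b*c" and "F3 \<equiv> -(a+b+c)*(a*b+a*c+b*c) + 9*(a*b*c)"
  shows "(F1>0 \<and> -P<0 \<and> F3<0 \<longrightarrow> 0<a) \<and> (F1>0 \<and> -P>0 \<and> F3>0 \<longrightarrow> c<0)
       \<and> (-P>0 \<and> (F1\<le>0 \<or> F3\<le>0) \<longrightarrow> a<0 \<and> 0<b) \<and> (-P<0 \<and> (F1\<le>0 \<or> F3\<ge>0) \<longrightarrow> b<0 \<and> 0<c)"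
proof -
  have amgm: "(x+y+z)*(x*y+x*z+y*z) - 9*(x*y*z) > 0" if "0<x" "x<y" "y<z" for x y z :: real
  proof -
    have e: "(x+y+z)*(x*y+x*z+y*z) - 9*(x*y*z) = x*(y-z)^2+y*(z-x)^2+z*(x-y)^2"
      by algebra
    have "z*(x-y)^2 > 0" using that by simp
    moreover have "x*(y-z)^2 \<ge> 0" "y*(z-x)^2 \<ge> 0" using that by simp_all
    ultimately show ?thesis unfolding e by linarith
  qed
  consider "0<a" | "a<0" "0<b" | "b<0" "0<c" | "c<0" using ab bc a0 b0 c0 by linarith
  then show ?thesis
  proof cases
    case 1
    have "P>0" using 1 ab bc unfolding P_def by simp
    moreover have "F3<0" using amgm[of a b c] 1 ab bc unfolding F3_def by linarith
    moreover have "F1>0" using 1 ab bc unfolding F1_def by (smt (verit) mult_pos_pos)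
    ultimately show ?thesis using 1 by auto
  next
    case 2
    have P: "P<0" using 2 ab bc unfolding P_def by (simp add: mult_neg_pos)
    have "F1 > 0 \<Longrightarrow> F3 < 0"
    proof -
      assume F1: "F1>0"
      have "-a*(b+c) < b*c" using F1 unfolding F1_def by (simp add: algebra_simps)
      also have "b*c < (b+c)*(b+c)" using 2 bc by (simp add: algebra_simps add_pos_pos)
      finally have h: "(-a)*(b+c) < (b+c)*(b+c)" by simp
      have "b+c>0" using 2 bc by linarith
      hence "-a < b+c" using h mult_less_cancel_right[of "-a" "b+c" "b+c"] by simp
      hence S: "a+b+c>0" by linarith
      have "(a+b+c)*(a*b+a*c+b*c) > 0" using S F1 unfolding F1_def by simp
      thus "F3<0" using P unfolding F3_def P_def by linarith
    qed
    thus ?thesis using 2 P by auto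
  next
    case 3
    have P: "P>0" using 3 ab bc unfolding P_def by (simp add: mult_neg_neg)
    have "F1 > 0 \<Longrightarrow> F3 > 0"
    proof -
      assume F1: "F1>0"
      have "-c*(a+b) < a*b" using F1 unfolding F1_def by (simp add: algebra_simps)
      also have "a*b < (a+b)*(a+b)" using 3 ab by (simp add: algebra_simps mult_neg_neg add_pos_pos)
      finally have h: "c*(-(a+b)) < (-(a+b))*(-(a+b))" by (simp add: algebra_simps)
      have "-(a+b)>0" using 3 ab by linarith
      hence "c < -(a+b)" using h mult_less_cancel_right[of c "-(a+b)" "-(a+b)"] by simp
      hence S: "a+b+c<0" by linarith
      have "(a+b+c)*(a*b+a*c+b*c) < 0" using S F1 unfolding F1_def by (simp add: mult_neg_pos)
      thus "F3>0" using P unfolding F3_def P_def by linarith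
    qed
    thus ?thesis using 3 P ab by auto
  next
    case 4
    have P: "P<0" using 4 ab bc unfolding P_def by (simp add: mult_neg_neg mult_pos_neg)
    have F1: "F1>0" using 4 ab bc unfolding F1_def by (smt (verit) mult_neg_neg)
    have "F3 > 0" using amgm[of "-c" "-b" "-a"] 4 ab bc unfolding F3_def by (simp add: algebra_simps)
    thus ?thesis using 4 P F1 by auto
  qed
qed



lemma cubic3:
  fixes E1 E2 E3 :: real
  assumes D: "E1^2*E2^2-4*E2^3-4*E1^3*E3+18*E1*E2*E3-27*E3^2 > 0"
  shows "\<exists>y1 y2 y3. y1<y2 \<and> y2<y3 \<and> E1 = y1+y2+y3 \<and> E2 = y1*y2+y1*y3+y2*y3 \<and> E3 = y1*y2*y3"
proof -
  define g where "g x = x^3 - E1*x^2 + E2*x - E3" for x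
  define M where "M = 1 + \<bar>E1\<bar> + \<bar>E2\<bar> + \<bar>E3\<bar>"
  have M1: "M \<ge> 1" unfolding M_def by simp
  have M2: "M^2 \<ge> M" using M1 by (simp add: power2_eq_square)
  have a1: "E1*M^2 \<le> \<bar>E1\<bar>*M^2" by (simp add: mult_right_mono)
  have a1': "(-E1)*M^2 \<le> \<bar>E1\<bar>*M^2" by (rule mult_right_mono) auto
  have a2: "\<bar>E2*M\<bar> \<le> \<bar>E2\<bar>*M^2" using M1 M2 by (simp add: abs_mult mult_left_mono)
  have a3: "\<bar>E3\<bar>*1 \<le> \<bar>E3\<bar>*M^2" using M1 M2 by (intro mult_left_mono) auto
  have m3: "M^3 = M*M^2" by (simp add: power3_eq_cube power2_eq_square)
  have mm: "M*M^2 = (1 + \<bar>E1\<bar> + \<bar>E2\<bar> + \<bar>E3\<bar>)*M^2" unfolding M_def ..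
  have gM: "g M \<ge> 0" unfolding g_def using a1 a2 a3 m3 mm
    by (simp add: algebra_simps) (smt (verit) abs_le_iff zero_le_power2)
  have gm: "g (-M) \<le> 0" unfolding g_def using a1' a2 a3 m3 mm
    by (simp add: algebra_simps) (smt (verit) abs_le_iff zero_le_power2)
  have "\<exists>y\<ge>-M. y \<le> M \<and> g y = 0"
    by (rule IVT) (use gM gm M1 in \<open>auto simp: g_def intro!: continuous_intros\<close>)
  then obtain y where gy: "g y = 0" by blast
  hence E3: "E3 = y^3 - E1*y^2 + E2*y" unfolding g_def by simp
  define u where "u = y - E1"
  define v where "v = y^2 - E1*y + E2"
  have Did: "E1^2*E2^2-4*E2^3-4*E1^3*E3+18*E1*E2*E3-27*E3^2 = (u^2-4*v)*(y^2+u*y+v)^2"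
    unfolding E3 u_def v_def by algebra
  define Q where "Q = u^2-4*v"
  have Qpos: "Q > 0"
  proof (rule ccontr)
    assume "\<not> Q > 0"
    hence "Q*(y^2+u*y+v)^2 \<le> 0" by (simp add: mult_nonpos_nonneg)
    thus False using D Did Q_def by simp
  qed
  have hy: "y^2+u*y+v \<noteq> 0"
  proof
    assume "y^2+u*y+v = 0" thus False using D Did by simp
  qed
  define z1 where "z1 = (-u - sqrt Q)/2"
  define z2 where "z2 = (-u + sqrt Q)/2"
  have sq: "sqrt Q ^2 = Q" using Qpos by simp
  have sqp: "sqrt Q > 0" using Qpos by simp
  have z12: "z1 < z2" unfolding z1_def z2_def using sqp by simp
  have s12: "z1 + z2 = -u" unfolding z1_def z2_def by (simp add: field_simps)
  have p12: "z1 * z2 = v" unfolding z1_def z2_def using sq unfolding Q_def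
    by (simp add: field_simps power2_eq_square)
  have hfac: "y^2+u*y+v = (y-z1)*(y-z2)" using s12 p12 by algebra
  have yz1: "y \<noteq> z1" and yz2: "y \<noteq> z2" using hy hfac by auto
  have e1: "E1 = y+z1+z2" using s12 u_def by simp
  have e2: "E2 = y*z1+y*z2+z1*z2" using s12 p12 u_def v_def by algebra
  have e3: "E3 = y*z1*z2" using p12 E3 v_def by algebra
  consider "y<z1" | "z1<y" "y<z2" | "z2<y" using yz1 yz2 z12 by linarith
  then show ?thesis
  proof cases
    case 1 thus ?thesis using e1 e2 e3 z12 by (intro exI[of _ y] exI[of _ z1] exI[of _ z2]) auto
  next
    case 2 thus ?thesis using e1 e2 e3 z12 by (intro exI[of _ z1] exI[of _ y] exI[of _ z2]) (auto simp: algebra_simps)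
  next
    case 3 thus ?thesis using e1 e2 e3 z12 by (intro exI[of _ z1] exI[of _ z2] exI[of _ y]) (auto simp: algebra_simps)
  qed
qed



lemma coeff5:
  fixes a0 a1 a2 a3 a4 c0 c1 c2 c3 c4 :: complex
  assumes "\<forall>z. z^5+a4*z^4+a3*z^3+a2*z^2+a1*z+a0 = z^5+c4*z^4+c3*z^3+c2*z^2+c1*z+c0"
  shows "a4=c4 \<and> a3=c3 \<and> a2=c2 \<and> a1=c1 \<and> a0=c0"
proof -
  have "poly [:a0,a1,a2,a3,a4,1:] = poly [:c0,c1,c2,c3,c4,1:]"
  proof
    fix z
    have "poly [:a0,a1,a2,a3,a4,1:] z = z^5+a4*z^4+a3*z^3+a2*z^2+a1*z+a0"
      by (simp add: algebra_simps eval_nat_numeral)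
    also have "\<dots> = z^5+c4*z^4+c3*z^3+c2*z^2+c1*z+c0" using assms by blast
    also have "\<dots> = poly [:c0,c1,c2,c3,c4,1:] z"
      by (simp add: algebra_simps eval_nat_numeral)
    finally show "poly [:a0,a1,a2,a3,a4,1:] z = poly [:c0,c1,c2,c3,c4,1:] z" .
  qed
  hence "[:a0,a1,a2,a3,a4,1:] = [:c0,c1,c2,c3,c4,1:]" by (simp add: poly_eq_poly_eq_iff)
  thus ?thesis by simp
qed

lemma five_cases:
  fixes \<alpha> :: "nat \<Rightarrow> complex"
  assumes "disc_roots5 \<alpha> = 0"
  shows "\<exists>\<delta> b1 b2 b3. \<forall>z. (\<Prod>i<5. (z - \<alpha> i)) = (z-\<delta>)^2*(z-b1)*(z-b2)*(z-b3)"
proof -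
  from assms obtain i j where ij: "i<5" "j\<in>{i<..<5}" "(\<alpha> i - \<alpha> j)^2 = 0"
    unfolding disc_roots5_def by (auto simp: prod_zero_iff)
  hence eq: "\<alpha> i = \<alpha> j" by simp
  have P: "(\<Prod>i<5. (z - \<alpha> i)) = (z-\<alpha> 0)*(z-\<alpha> 1)*(z-\<alpha> 2)*(z-\<alpha> 3)*(z-\<alpha> 4)" for z
    by (simp add: eval_nat_numeral)
  have W: "\<forall>z. (z-\<alpha> 0)*(z-\<alpha> 1)*(z-\<alpha> 2)*(z-\<alpha> 3)*(z-\<alpha> 4) = (z-\<delta>)^2*(z-b1)*(z-b2)*(z-b3)
     \<Longrightarrow> ?thesis" for \<delta> b1 b2 b3 unfolding P by blast
  have "i=0\<and>j=1 \<or> i=0\<and>j=2 \<or> i=0\<and>j=3 \<or> i=0\<and>j=4 \<or> i=1\<and>j=2 \<or> i=1\<and>j=3 \<or> i=1\<and>j=4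
     \<or> i=2\<and>j=3 \<or> i=2\<and>j=4 \<or> i=3\<and>j=4" using ij(1) ij(2) by (simp only: greaterThanLessThan_iff) presburger
  then show ?thesis
  proof (elim disjE conjE)
    assume "i=0" "j=1"
    hence e: "\<alpha> 0 = \<alpha> 1" using eq by simp
    show ?thesis by (rule W[of "\<alpha> 1" "\<alpha> 2" "\<alpha> 3" "\<alpha> 4"]) (unfold e, intro allI, algebra)
  next
    assume "i=0" "j=2"
    hence e: "\<alpha> 0 = \<alpha> 2" using eq by simp
    show ?thesis by (rule W[of "\<alpha> 2" "\<alpha> 1" "\<alpha> 3" "\<alpha> 4"]) (unfold e, intro allI, algebra)
  next
    assume "i=0" "j=3"
    hence e: "\<alpha> 0 = \<alpha> 3" using eq by simp
    show ?thesis by (rule W[of "\<alpha> 3" "\<alpha> 1" "\<alpha> 2" "\<alpha> 4"]) (unfold e, intro allI, algebra)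
  next
    assume "i=0" "j=4"
    hence e: "\<alpha> 0 = \<alpha> 4" using eq by simp
    show ?thesis by (rule W[of "\<alpha> 4" "\<alpha> 1" "\<alpha> 2" "\<alpha> 3"]) (unfold e, intro allI, algebra)
  next
    assume "i=1" "j=2"
    hence e: "\<alpha> 1 = \<alpha> 2" using eq by simp
    show ?thesis by (rule W[of "\<alpha> 2" "\<alpha> 0" "\<alpha> 3" "\<alpha> 4"]) (unfold e, intro allI, algebra)
  next
    assume "i=1" "j=3"
    hence e: "\<alpha> 1 = \<alpha> 3" using eq by simp
    show ?thesis by (rule W[of "\<alpha> 3" "\<alpha> 0" "\<alpha> 2" "\<alpha> 4"]) (unfold e, intro allI, algebra)
  next
    assume "i=1" "j=4"
    hence e: "\<alpha> 1 = \<alpha> 4" using eq by simp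
    show ?thesis by (rule W[of "\<alpha> 4" "\<alpha> 0" "\<alpha> 2" "\<alpha> 3"]) (unfold e, intro allI, algebra)
  next
    assume "i=2" "j=3"
    hence e: "\<alpha> 2 = \<alpha> 3" using eq by simp
    show ?thesis by (rule W[of "\<alpha> 3" "\<alpha> 0" "\<alpha> 1" "\<alpha> 4"]) (unfold e, intro allI, algebra)
  next
    assume "i=2" "j=4"
    hence e: "\<alpha> 2 = \<alpha> 4" using eq by simp
    show ?thesis by (rule W[of "\<alpha> 4" "\<alpha> 0" "\<alpha> 1" "\<alpha> 3"]) (unfold e, intro allI, algebra)
  next
    assume "i=3" "j=4"
    hence e: "\<alpha> 3 = \<alpha> 4" using eq by simp
    show ?thesis by (rule W[of "\<alpha> 4" "\<alpha> 0" "\<alpha> 1" "\<alpha> 2"]) (unfold e, intro allI, algebra)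
  qed
qed

lemma core:
  fixes p q r s t :: real and \<delta> b1 b2 b3 :: complex
  assumes fac: "\<forall>z::complex. quintic (of_real p) (of_real q) (of_real r) (of_real s) (of_real t) z
                     = (z-\<delta>)^2*(z-b1)*(z-b2)*(z-b3)"
    and L1pos: "L1 p q r s t > 0"
  shows  "let d = C0 p q r s t / L1 p q r s t;
             F1 = q + 4*p*d + 10*d^2;
             F2 = r + 3*q*d + 6*p*d^2 + 10*d^3;
             F3 = p*q + 4*p^2*d - 24*p*d^2 - 22*q*d - 40*d^3 - 9*r
         in \<exists>y1 y2 y3::real. y1 < y2 \<and> y2 < y3 \<and> d \<noteq> y1 \<and> d \<noteq> y2 \<and> d \<noteq> y3 \<and>
              (\<forall>x::real. quintic p q r s t x = (x - d)^2 * (x - y1) * (x - y2) * (x - y3)) \<and>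
              (F1 > 0 \<and> F2 < 0 \<and> F3 < 0 \<longrightarrow> d < y1) \<and>
              (F1 > 0 \<and> F2 > 0 \<and> F3 > 0 \<longrightarrow> y3 < d) \<and>
              (F2 > 0 \<and> (F1 \<le> 0 \<or> F3 \<le> 0) \<longrightarrow> y1 < d \<and> d < y2) \<and>
              (F2 < 0 \<and> (F1 \<le> 0 \<or> F3 \<ge> 0) \<longrightarrow> y2 < d \<and> d < y3)"

proof -
  define e1 where "e1 = b1+b2+b3"
  define e2 where "e2 = b1*b2+b1*b3+b2*b3"
  define e3 where "e3 = b1*b2*b3"
  have "\<forall>z. z^5+(of_real p)*z^4+(of_real q)*z^3+(of_real r)*z^2+(of_real s)*z+(of_real t)
     = z^5+(-e1-2*\<delta>)*z^4+(e2+2*\<delta>*e1+\<delta>^2)*z^3+(-e3-2*\<delta>*e2-\<delta>^2*e1)*z^2+(2*\<delta>*e3+\<delta>^2*e2)*z+(-(\<delta>^2*e3))"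
  proof
    fix z :: complex
    have "z^5+(of_real p)*z^4+(of_real q)*z^3+(of_real r)*z^2+(of_real s)*z+(of_real t)
       = (z-\<delta>)^2*(z-b1)*(z-b2)*(z-b3)" using fac unfolding quintic_def by blast
    also have "\<dots> = z^5+(-e1-2*\<delta>)*z^4+(e2+2*\<delta>*e1+\<delta>^2)*z^3+(-e3-2*\<delta>*e2-\<delta>^2*e1)*z^2+(2*\<delta>*e3+\<delta>^2*e2)*z+(-(\<delta>^2*e3))"
      unfolding e1_def e2_def e3_def by algebra
    finally show "z^5+(of_real p)*z^4+(of_real q)*z^3+(of_real r)*z^2+(of_real s)*z+(of_real t)
     = z^5+(-e1-2*\<delta>)*z^4+(e2+2*\<delta>*e1+\<delta>^2)*z^3+(-e3-2*\<delta>*e2-\<delta>^2*e1)*z^2+(2*\<delta>*e3+\<delta>^2*e2)*z+(-(\<delta>^2*e3))" .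
  qed
  from coeff5[OF this] have cp: "of_real p = -e1-2*\<delta>" and cq: "of_real q = e2+2*\<delta>*e1+\<delta>^2"
    and cr: "of_real r = -e3-2*\<delta>*e2-\<delta>^2*e1" and cs: "of_real s = 2*\<delta>*e3+\<delta>^2*e2"
    and ct: "of_real t = -(\<delta>^2*e3)" by auto
  have hC: "of_real (C0 p q r s t) = \<delta> * of_real (L1 p q r s t)"
    unfolding C0c L1c cp cq cr cs ct by (rule idC)
  define d where "d = C0 p q r s t / L1 p q r s t"
  have L0: "L1 p q r s t \<noteq> 0" using L1pos by simp
  have \<delta>d: "\<delta> = of_real d" unfolding d_def using hC L0 by (simp add: field_simps)
  define E1 where "E1 = -p-2*d"
  define E2 where "E2 = q-2*d*E1-d^2"
  define E3 where "E3 = -r-2*d*E2-d^2*E1"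
  have hE1: "e1 = of_real E1" unfolding E1_def using cp \<delta>d by simp
  have hE2: "e2 = of_real E2" unfolding E2_def using cq \<delta>d hE1 by simp
  have hE3: "e3 = of_real E3" unfolding E3_def using cr \<delta>d hE1 hE2 by simp
  have hp: "p = -E1-2*d" unfolding E1_def by simp
  have hq: "q = E2+2*d*E1+d^2" unfolding E2_def by simp
  have hr: "r = -E3-2*d*E2-d^2*E1" unfolding E3_def by simp
  have "(of_real s :: complex) = of_real (2*d*E3+d^2*E2)" using cs \<delta>d hE2 hE3 by simp
  hence hs: "s = 2*d*E3+d^2*E2" by (simp only: of_real_eq_iff)
  have "(of_real t :: complex) = of_real (-(d^2*E3))" using ct \<delta>d hE3 by simp
  hence ht: "t = -(d^2*E3)" by (simp only: of_real_eq_iff)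
  have "L1 p q r s t = 2 * (d^3-E1*d^2+E2*d-E3)^2 * (E1^2*E2^2-4*E2^3-4*E1^3*E3+18*E1*E2*E3-27*E3^2)"
    unfolding L1g hp hq hr hs ht by (rule idL)
  hence Lfac: "(d^3-E1*d^2+E2*d-E3)^2 * (E1^2*E2^2-4*E2^3-4*E1^3*E3+18*E1*E2*E3-27*E3^2) > 0"
    using L1pos by simp
  have gd: "d^3-E1*d^2+E2*d-E3 \<noteq> 0" using Lfac by auto
  have Dpos: "E1^2*E2^2-4*E2^3-4*E1^3*E3+18*E1*E2*E3-27*E3^2 > 0"
  proof (rule ccontr)
    assume "\<not> ?thesis"
    hence "(d^3-E1*d^2+E2*d-E3)^2 * (E1^2*E2^2-4*E2^3-4*E1^3*E3+18*E1*E2*E3-27*E3^2) \<le> 0"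
      by (simp add: mult_nonneg_nonpos)
    thus False using Lfac by simp
  qed
  obtain y1 y2 y3 where y: "y1<y2" "y2<y3" and y1: "E1 = y1+y2+y3" and y2: "E2 = y1*y2+y1*y3+y2*y3"
    and y3: "E3 = y1*y2*y3" using cubic3[OF Dpos] by blast
  have gdf: "d^3-E1*d^2+E2*d-E3 = (d-y1)*(d-y2)*(d-y3)" unfolding y1 y2 y3 by algebra
  have dn: "d \<noteq> y1" "d \<noteq> y2" "d \<noteq> y3" using gd unfolding gdf by auto
  have qf: "quintic p q r s t x = (x - d)^2 * (x - y1) * (x - y2) * (x - y3)" for x
    unfolding quintic_def hp hq hr hs ht y1 y2 y3 by algebra
  have F1: "q + 4*p*d + 10*d^2 = (y1-d)*(y2-d)+(y1-d)*(y3-d)+(y2-d)*(y3-d)"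
    unfolding hp hq y1 y2 y3 by algebra
  have F2: "r + 3*q*d + 6*p*d^2 + 10*d^3 = -((y1-d)*(y2-d)*(y3-d))"
    unfolding hp hq hr y1 y2 y3 by algebra
  have F3: "p*q + 4*p^2*d - 24*p*d^2 - 22*q*d - 40*d^3 - 9*r
     = -((y1-d)+(y2-d)+(y3-d))*((y1-d)*(y2-d)+(y1-d)*(y3-d)+(y2-d)*(y3-d)) + 9*((y1-d)*(y2-d)*(y3-d))"
    unfolding hp hq hr y1 y2 y3 by algebra
  note sg = signs_u[of "y1-d" "y2-d" "y3-d"]
  show ?thesis
    unfolding Let_def d_def[symmetric]
    apply (rule exI[of _ y1], rule exI[of _ y2], rule exI[of _ y3])
    using y dn qf sg unfolding F1 F2 F3 by (auto simp: algebra_simps)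
qed

theorem mainTheorem8:
  fixes p q r s t :: real and \<alpha> :: "nat \<Rightarrow> complex"
  assumes roots: "\<forall>z::complex. quintic (of_real p) (of_real q) (of_real r) (of_real s) (of_real t) z
                     = (\<Prod>i<5. (z - \<alpha> i))"
    and D0: "disc_roots5 \<alpha> = 0"
    and L1pos: "L1 p q r s t > 0"
  shows "let d = C0 p q r s t / L1 p q r s t;
             F1 = q + 4*p*d + 10*d^2;
             F2 = r + 3*q*d + 6*p*d^2 + 10*d^3;
             F3 = p*q + 4*p^2*d - 24*p*d^2 - 22*q*d - 40*d^3 - 9*r
         in \<exists>y1 y2 y3::real. y1 < y2 \<and> y2 < y3 \<and> d \<noteq> y1 \<and> d \<noteq> y2 \<and> d \<noteq> y3 \<and>
              (\<forall>x::real. quintic p q r s t x = (x - d)^2 * (x - y1) * (x - y2) * (x - y3)) \<and>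
              (F1 > 0 \<and> F2 < 0 \<and> F3 < 0 \<longrightarrow> d < y1) \<and>
              (F1 > 0 \<and> F2 > 0 \<and> F3 > 0 \<longrightarrow> y3 < d) \<and>
              (F2 > 0 \<and> (F1 \<le> 0 \<or> F3 \<le> 0) \<longrightarrow> y1 < d \<and> d < y2) \<and>
              (F2 < 0 \<and> (F1 \<le> 0 \<or> F3 \<ge> 0) \<longrightarrow> y2 < d \<and> d < y3)"
  using core[of p q r s t] five_cases[OF D0] roots L1pos by auto

end
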